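(* In the setting described in the context, $$\mathbb{E}[V]=\mathbb{E}\left[v(I\setminus S_{\varepsilon^{-1}})\right]\ \ge\ \left(\varepsilon-\varepsilon^{3/2}\right)\cdot\sum_{j=1}^{\varepsilon^{-1}-\varepsilon^{-1/2}}\frac{\mathbb{E}[v(x^j)]}{1-(j-1)\varepsilon}.$$
   Context: A CMK instance is $\mathcal{I}=(I,w,v,m,k)$ with $I$ a finite item set, $w:I\to[0,1]$, $v:I\to\mathbb{R}_{\ge0}$, $m,k\in\mathbb{N}_{>0}$. A configuration is $C\subseteq I$ with $|C|\le k$ and $\sum_{i\in C}w(i)\le1$; $\mathcal{C}$ is the set of configurations and $\mathcal{C}(i)=\{C\in\mathcal{C}:i\in C\}$. A solution is a tuple of $m$ configurations, with value $v$ of their union; $\mathrm{OPT}(\mathcal{I})$ is the maximum value. A fractional solution is $x\in\mathbb{R}_{\ge0}^{\mathcal{C}}$, with $\mathrm{cover}_i(x)=\sum_{C\in\mathcal{C}(i)}x_C$, $\|x\|=\sum_Cx_C$; it is feasible if $\mathrm{cover}(x)\in[0,1]^I$; for $y\in\mathbb{R}^I$, $v(y)=\sum_iy_iv(i)$, and $v(x)=v(\mathrm{cover}(x))$. For $S\subseteq I$ and $\ell\in\mathbb{N}$, $\mathrm{LP}(S,\ell)$ is: maximize $v(x)$ over feasible fractional solutions $x$ with $x_C=0$ whenever $C\not\subseteq S$, and $\|x\|=\ell$. For $\|x\|\ne0$, a random configuration $R$ is distributed by $x$ ($R\sim x$) if $\Pr(R=C)=x_C/\|x\|$. Given $\varepsilon\in(0,0.1)$,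 $\mathcal{I}$ is $\varepsilon$-simple if $m>\exp(\exp(\varepsilon^{-30}))$ and $\varepsilon m\in\mathbb{N}$. Iterative randomized rounding: let $\varepsilon\in(0,0.1)$ with $\varepsilon^{-1/2}\in\mathbb{N}$ and $\mathcal{I}$ be $\varepsilon$-simple; let $q=\varepsilon m$ and $S_0=I$. For $j=1,\dots,\varepsilon^{-1}$: let $m_j=m(1-(j-1)\varepsilon)$; let $x^j$ be a $(1-\varepsilon)$-approximate solution of $\mathrm{LP}(S_{j-1},m_j)$ (a feasible solution of value at least $(1-\varepsilon)$ times its optimum), determined by the outcomes of the samples of previous iterations; sample independently $R^j_1,\dots,R^j_q\sim x^j$; set $S_j=S_{j-1}\setminus\bigcup_{b=1}^qR^j_b$. The output value is $V=v(I\setminus S_{\varepsilon^{-1}})$, where $v(T)=\sum_{i\in T}v(i)$. *)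

theory Defs
  imports "HOL-Analysis.Analysis" "HOL-Probability.Probability"
begin

definition confs :: "'a set \<Rightarrow> ('a \<Rightarrow> real) \<Rightarrow> nat \<Rightarrow> 'a set set" where
  "confs I w k = {C. C \<subseteq> I \<and> card C \<le> k \<and> sum w C \<le> 1}"

text \<open>Fractional solutions are functions on sets, nonnegative, and zero outside the
  configurations (i.e. elements of the nonnegative orthant indexed by configurations).\<close>
definition frac_sol :: "'a set \<Rightarrow> ('a \<Rightarrow> real) \<Rightarrow> nat \<Rightarrow> ('a set \<Rightarrow> real) \<Rightarrow> bool" where
  "frac_sol I w k x \<longleftrightarrow> (\<forall>C. 0 \<le> x C) \<and> (\<forall>C. C \<notin> confs I w k \<longrightarrow> x C = 0)"

definition cover :: "'a set \<Rightarrow> ('a \<Rightarrow> real) \<Rightarrow> nat \<Rightarrow> ('a set \<Rightarrow> real) \<Rightarrow> 'a \<Rightarrow> real" where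
  "cover I w k x i = (\<Sum>C\<in>{C\<in>confs I w k. i \<in> C}. x C)"

definition fnorm :: "'a set \<Rightarrow> ('a \<Rightarrow> real) \<Rightarrow> nat \<Rightarrow> ('a set \<Rightarrow> real) \<Rightarrow> real" where
  "fnorm I w k x = (\<Sum>C\<in>confs I w k. x C)"

definition feasible :: "'a set \<Rightarrow> ('a \<Rightarrow> real) \<Rightarrow> nat \<Rightarrow> ('a set \<Rightarrow> real) \<Rightarrow> bool" where
  "feasible I w k x \<longleftrightarrow> frac_sol I w k x \<and> (\<forall>i\<in>I. cover I w k x i \<le> 1)"

definition fval :: "'a set \<Rightarrow> ('a \<Rightarrow> real) \<Rightarrow> ('a \<Rightarrow> real) \<Rightarrow> nat \<Rightarrow> ('a set \<Rightarrow> real) \<Rightarrow> real" where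
  "fval I w v k x = (\<Sum>i\<in>I. cover I w k x i * v i)"

definition LP_feas :: "'a set \<Rightarrow> ('a \<Rightarrow> real) \<Rightarrow> nat \<Rightarrow> 'a set \<Rightarrow> real \<Rightarrow> ('a set \<Rightarrow> real) set" where
  "LP_feas I w k S l = {x. feasible I w k x \<and> (\<forall>C. \<not> C \<subseteq> S \<longrightarrow> x C = 0) \<and> fnorm I w k x = l}"

definition LP_opt :: "'a set \<Rightarrow> ('a \<Rightarrow> real) \<Rightarrow> ('a \<Rightarrow> real) \<Rightarrow> nat \<Rightarrow> 'a set \<Rightarrow> real \<Rightarrow> real" where
  "LP_opt I w v k S l = Sup (fval I w v k ` LP_feas I w k S l)"

definition approx_LP :: "real \<Rightarrow> 'a set \<Rightarrow> ('a \<Rightarrow> real) \<Rightarrow> ('a \<Rightarrow> real) \<Rightarrow> nat \<Rightarrow> 'a set \<Rightarrow> real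
    \<Rightarrow> ('a set \<Rightarrow> real) \<Rightarrow> bool" where
  "approx_LP eps I w v k S l x \<longleftrightarrow>
     x \<in> LP_feas I w k S l \<and> fval I w v k x \<ge> (1 - eps) * LP_opt I w v k S l"

definition sample_conf :: "'a set \<Rightarrow> ('a \<Rightarrow> real) \<Rightarrow> nat \<Rightarrow> ('a set \<Rightarrow> real) \<Rightarrow> 'a set pmf" where
  "sample_conf I w k x =
     embed_pmf (\<lambda>C. if C \<in> confs I w k then x C / fnorm I w k x else 0)"

text \<open>Remaining item set S after a history of sampled rounds (each round a list of
  sampled configurations).\<close>
definition remaining :: "'a set \<Rightarrow> 'a set list list \<Rightarrow> 'a set" where
  "remaining I h = I - (\<Union>Rs\<in>set h. \<Union>(set Rs))"

text \<open>Distribution of the history after j rounds of iterative randomized rounding.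
  sel j h is the fractional solution x^j chosen in round j given the outcome h of the
  first j-1 rounds; in each round q configurations are sampled independently.\<close>
primrec irr_run :: "'a set \<Rightarrow> ('a \<Rightarrow> real) \<Rightarrow> nat \<Rightarrow> nat
    \<Rightarrow> (nat \<Rightarrow> 'a set list list \<Rightarrow> ('a set \<Rightarrow> real)) \<Rightarrow> nat \<Rightarrow> 'a set list list pmf" where
  "irr_run I w k q sel 0 = return_pmf []"
| "irr_run I w k q sel (Suc j) =
     bind_pmf (irr_run I w k q sel j)
       (\<lambda>h. map_pmf (\<lambda>Rs. h @ [Rs]) (replicate_pmf q (sample_conf I w k (sel (Suc j) h))))"

end

theory Submission
  imports Defs
begin

lemma E_fin:
  fixes f :: "'b \<Rightarrow> real"
  assumes "finite (set_pmf p)"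
  shows "measure_pmf.expectation p f = (\<Sum>a\<in>set_pmf p. pmf p a * f a)"
  using integral_measure_pmf[where M=p and f=f, OF assms] by simp

lemma E_bind_fin:
  fixes h :: "'c \<Rightarrow> real"
  assumes "finite (set_pmf p)" "\<And>a. a \<in> set_pmf p \<Longrightarrow> finite (set_pmf (f a))"
  shows "measure_pmf.expectation (bind_pmf p f) h = measure_pmf.expectation p (\<lambda>a. measure_pmf.expectation (f a) h)"
  using pmf_expectation_bind[of "set_pmf p" f p h] assms E_fin[OF assms(1)] by simp

lemma fin_rep: "finite (set_pmf D) \<Longrightarrow> finite (set_pmf (replicate_pmf n D))"
  unfolding set_replicate_pmf
  using finite_lists_length_eq[of "set_pmf D" n] by (simp add: lists_eq_set)

lemma E_rep_prod:
  fixes g :: "'b \<Rightarrow> real"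
  assumes "finite (set_pmf D)"
  shows "measure_pmf.expectation (replicate_pmf n D) (\<lambda>xs. prod_list (map g xs))
       = (measure_pmf.expectation D g) ^ n"
proof (induction n)
  case 0 then show ?case by simp
next
  case (Suc n)
  have "measure_pmf.expectation (replicate_pmf (Suc n) D) (\<lambda>xs. prod_list (map g xs))
     = measure_pmf.expectation D (\<lambda>x. measure_pmf.expectation
         (bind_pmf (replicate_pmf n D) (\<lambda>xs. return_pmf (x#xs))) (\<lambda>xs. prod_list (map g xs)))"
    by (simp only: replicate_pmf.simps, rule E_bind_fin)
       (auto simp: assms fin_rep)
  also have "\<dots> = measure_pmf.expectation D (\<lambda>x. g x * measure_pmf.expectation
         (replicate_pmf n D) (\<lambda>xs. prod_list (map g xs)))"
    by (subst E_bind_fin) (auto simp: assms fin_rep)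
  also have "\<dots> = (measure_pmf.expectation D g) ^ Suc n"
    using Suc by simp
  finally show ?case .
qed


lemma finite_confs: "finite I \<Longrightarrow> finite (confs I w k)"
  unfolding confs_def by (rule finite_subset[of _ "Pow I"]) auto

lemma samp_pmf:
  assumes finI: "finite I" and x: "x \<in> LP_feas I w k S M" and M: "M > 0"
  shows "pmf (sample_conf I w k x) C = (if C \<in> confs I w k then x C / M else 0)"
proof -
  let ?f = "\<lambda>C. if C \<in> confs I w k then x C / fnorm I w k x else 0"
  have fs: "frac_sol I w k x" and fn: "fnorm I w k x = M"
    using x unfolding LP_feas_def feasible_def by auto
  have nn: "\<And>C. 0 \<le> ?f C" using fs M fn unfolding frac_sol_def by auto
  have "(\<integral>\<^sup>+C. ennreal (?f C) \<partial>count_space UNIV) = (\<Sum>C\<in>confs I w k. ennreal (?f C))"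
    by (rule nn_integral_count_space') (auto simp: finite_confs finI)
  also have "\<dots> = ennreal (\<Sum>C\<in>confs I w k. ?f C)"
    using nn by (subst sum_ennreal) (auto simp del: sum_ennreal, metis)
  also have "(\<Sum>C\<in>confs I w k. ?f C) = (\<Sum>C\<in>confs I w k. x C) / fnorm I w k x"
    by (simp add: sum_divide_distrib)
  also have "\<dots> = 1" using fn M unfolding fnorm_def by simp
  finally have "(\<integral>\<^sup>+C. ennreal (?f C) \<partial>count_space UNIV) = 1" by simp
  then have "pmf (embed_pmf ?f) C = ?f C"
    using nn by (subst pmf_embed_pmf) auto
  then show ?thesis unfolding sample_conf_def using fn by simp
qed

lemma samp_set:
  assumes "finite I" "x \<in> LP_feas I w k S M" "M > 0"
  shows "set_pmf (sample_conf I w k x) \<subseteq> confs I w k"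
  using samp_pmf[OF assms] by (auto simp: set_pmf_eq)

lemma samp_fin:
  assumes "finite I" "x \<in> LP_feas I w k S M" "M > 0"
  shows "finite (set_pmf (sample_conf I w k x))"
  using samp_set[OF assms] finite_confs[OF assms(1)] finite_subset by blast

lemma samp_E:
  assumes finI: "finite I" and x: "x \<in> LP_feas I w k S M" and M: "M > 0"
  shows "measure_pmf.expectation (sample_conf I w k x) (\<lambda>C. of_bool (i \<in> C)) = cover I w k x i / M"
proof -
  have "measure_pmf.expectation (sample_conf I w k x) (\<lambda>C. of_bool (i \<in> C))
     = (\<Sum>C\<in>confs I w k. pmf (sample_conf I w k x) C *\<^sub>R (of_bool (i \<in> C)::real))"
    by (rule integral_measure_pmf) (use samp_set[OF assms] finite_confs[OF finI] in auto)
  also have "\<dots> = (\<Sum>C\<in>confs I w k. (if i \<in> C then x C / M else 0))"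
    by (rule sum.cong) (auto simp: samp_pmf[OF assms])
  also have "\<dots> = (\<Sum>C\<in>{C\<in>confs I w k. i \<in> C}. x C) / M"
    by (simp add: sum.inter_filter[symmetric, OF finite_confs[OF finI]] sum_divide_distrib)
  finally show ?thesis unfolding cover_def .
qed


lemma prod_list_of_bool: "prod_list (map (\<lambda>R. (of_bool (P R)::real)) xs) = of_bool (\<forall>R\<in>set xs. P R)"
  by (induction xs) auto

lemma E_gain:
  assumes finI: "finite I" and SI: "S \<subseteq> I" and x: "x \<in> LP_feas I w k S M" and M: "M > 0"
  shows "measure_pmf.expectation (replicate_pmf q (sample_conf I w k x)) (\<lambda>Rs. sum v (S \<inter> \<Union>(set Rs)))
       = (\<Sum>i\<in>S. v i * (1 - (1 - cover I w k x i / M) ^ q))"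
proof -
  let ?D = "sample_conf I w k x"
  have fD: "finite (set_pmf ?D)" by (rule samp_fin[OF finI x M])
  have fR: "finite (set_pmf (replicate_pmf q ?D))" by (rule fin_rep[OF fD])
  have finS: "finite S" using finI SI finite_subset by blast
  have pw: "sum v (S \<inter> \<Union>(set Rs)) = (\<Sum>i\<in>S. v i * (1 - prod_list (map (\<lambda>R. (of_bool (i \<notin> R)::real)) Rs)))" for Rs
    unfolding prod_list_of_bool sum.inter_restrict[OF finS]
    by (rule sum.cong) auto
  have E1: "measure_pmf.expectation ?D (\<lambda>R. (of_bool (i \<notin> R)::real)) = 1 - cover I w k x i / M" for i
  proof -
    have "measure_pmf.expectation ?D (\<lambda>R. (of_bool (i \<notin> R)::real)) = measure_pmf.expectation ?D (\<lambda>R. 1 - (of_bool (i \<in> R)::real))"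
      by (rule Bochner_Integration.integral_cong) auto
    also have "\<dots> = 1 - measure_pmf.expectation ?D (\<lambda>R. of_bool (i \<in> R))"
    proof -
      have "measure_pmf.expectation ?D (\<lambda>R. 1 - (of_bool (i \<in> R)::real)) = measure_pmf.expectation ?D (\<lambda>R. 1) - measure_pmf.expectation ?D (\<lambda>R. of_bool (i \<in> R))"
        by (rule Bochner_Integration.integral_diff; rule integrable_measure_pmf_finite[OF fD])
      moreover have "measure_pmf.expectation ?D (\<lambda>R. 1::real) = 1"
        by simp
      ultimately show ?thesis by simp
    qed
    finally show ?thesis using samp_E[OF finI x M] by simp
  qed
  have "measure_pmf.expectation (replicate_pmf q ?D) (\<lambda>Rs. sum v (S \<inter> \<Union>(set Rs)))
      = measure_pmf.expectation (replicate_pmf q ?D) (\<lambda>Rs. (\<Sum>i\<in>S. v i * (1 - prod_list (map (\<lambda>R. (of_bool (i \<notin> R)::real)) Rs))))"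
    unfolding pw ..
  also have "\<dots> = (\<Sum>i\<in>S. measure_pmf.expectation (replicate_pmf q ?D) (\<lambda>Rs. v i * (1 - prod_list (map (\<lambda>R. (of_bool (i \<notin> R)::real)) Rs))))"
    by (rule Bochner_Integration.integral_sum) (auto intro: integrable_measure_pmf_finite[OF fR])
  also have "\<dots> = (\<Sum>i\<in>S. v i * (1 - measure_pmf.expectation (replicate_pmf q ?D) (\<lambda>Rs. prod_list (map (\<lambda>R. (of_bool (i \<notin> R)::real)) Rs))))"
    by (rule sum.cong, simp, subst integral_mult_right_zero, subst Bochner_Integration.integral_diff)
       (auto intro: integrable_measure_pmf_finite[OF fR])
  also have "\<dots> = (\<Sum>i\<in>S. v i * (1 - (1 - cover I w k x i / M) ^ q))"
    by (simp add: E_rep_prod[OF fD] E1)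
  finally show ?thesis .
qed


lemma num_bound:
  fixes c m r a :: real and q :: nat
  assumes c: "0 \<le> c" "c \<le> 1" and m: "m > 0" and r: "0 < r" "r < 1"
    and a: "r \<le> a" "a \<le> 1" and q: "real q = r^2 * m" and ma: "1 \<le> m * a"
  shows "1 - (1 - c / (m * a)) ^ q \<ge> (r^2 - r^3) * c / a"
proof -
  define t where "t = c / (m * a)"
  define s where "s = r^2 * c / a"
  have apos: "a > 0" using a r by linarith
  have t0: "0 \<le> t" using c m apos by (simp add: t_def)
  have t1: "t \<le> 1" unfolding t_def using c ma apos m
    by (simp add: divide_le_eq) 
  have "(1 - t) ^ q \<le> exp (- t) ^ q"
    by (rule power_mono) (use exp_ge_add_one_self[of "-t"] t1 in auto)
  also have "\<dots> = exp (- (t * real q))" by (simp add: exp_of_nat_mult[symmetric] mult.commute)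
  also have "t * real q = s" unfolding t_def s_def q using m apos by (simp add: field_simps power2_eq_square)
  finally have e1: "(1 - t) ^ q \<le> exp (- s)" .
  have s0: "0 \<le> s" unfolding s_def using c apos by simp
  have sr: "s \<le> r" proof -
    have "s \<le> r^2 / a" unfolding s_def using c apos r by (simp add: divide_right_mono mult_left_le)
    also have "\<dots> \<le> r^2 / r" using a r apos by (intro divide_left_mono) auto
    also have "\<dots> = r" using r by (simp add: power2_eq_square)
    finally show ?thesis .
  qed
  have "exp (- s) \<le> 1 / (1 + s)"
    using exp_ge_add_one_self[of s] s0 by (simp add: exp_minus field_simps)
  with e1 have "1 - (1 - t)^q \<ge> 1 - 1 / (1 + s)" by linarith
  moreover have "1 - 1 / (1 + s) = s / (1 + s)" using s0 by (simp add: field_simps)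
  moreover have "s / (1 + s) \<ge> s * (1 - s)"
    using s0 by (simp add: field_simps)
  moreover have "s * (1 - s) \<ge> s * (1 - r)" using s0 sr by (simp add: mult_left_mono)
  moreover have "s * (1 - r) = (r^2 - r^3) * c / a" unfolding s_def by (simp add: field_simps power2_eq_square power3_eq_cube)
  ultimately show ?thesis unfolding t_def by linarith
qed


lemma run_len: "h \<in> set_pmf (irr_run I w k q sel n) \<Longrightarrow> length h = n"
  by (induction n arbitrary: h) (auto simp: set_replicate_pmf)

lemma run_take: "n \<le> n' \<Longrightarrow> map_pmf (take n) (irr_run I w k q sel n') = irr_run I w k q sel n"
proof (induction n')
  case 0 then show ?case by simp
next
  case (Suc n')
  show ?case
  proof (cases "n = Suc n'")
    case True
    have "map_pmf (take n) (irr_run I w k q sel (Suc n')) = map_pmf id (irr_run I w k q sel (Suc n'))"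
      by (rule map_pmf_cong) (auto dest: run_len simp: True)
    then show ?thesis using True by simp
  next
    case False
    then have nn: "n \<le> n'" using Suc by simp
    have "map_pmf (take n) (irr_run I w k q sel (Suc n'))
        = bind_pmf (irr_run I w k q sel n') (\<lambda>h. return_pmf (take n h))"
      unfolding irr_run.simps map_bind_pmf map_pmf_comp
    proof (rule bind_pmf_cong[OF refl])
      fix h assume "h \<in> set_pmf (irr_run I w k q sel n')"
      then have "length h = n'" by (rule run_len)
      then have "\<And>Rs. take n (h @ [Rs]) = take n h" using nn by simp
      then show "map_pmf (\<lambda>x. take n (h @ [x])) (replicate_pmf q (sample_conf I w k (sel (Suc n') h))) = return_pmf (take n h)"
        by simp
    qed
    also have "\<dots> = map_pmf (take n) (irr_run I w k q sel n')" by (simp add: map_pmf_def)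
    finally show ?thesis using Suc.IH[OF nn] by simp
  qed
qed

lemma run_fin:
  assumes "\<forall>j\<in>{1..J}. \<forall>h. length h = j - 1 \<longrightarrow> finite (set_pmf (sample_conf I w k (sel j h)))"
  shows "n \<le> J \<Longrightarrow> finite (set_pmf (irr_run I w k q sel n))"
proof (induction n)
  case 0 then show ?case by simp
next
  case (Suc n)
  have "finite (set_pmf (replicate_pmf q (sample_conf I w k (sel (Suc n) h))))"
    if "h \<in> set_pmf (irr_run I w k q sel n)" for h
    using assms Suc.prems run_len[OF that] by (intro fin_rep) auto
  then show ?case using Suc by (auto simp: set_bind_pmf)
qed


lemma G_app:
  assumes "finite I"
  shows "sum v (I - remaining I (h @ [Rs])) = sum v (I - remaining I h) + sum v (remaining I h \<inter> \<Union>(set Rs))"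
proof -
  have "I - remaining I (h @ [Rs]) = (I - remaining I h) \<union> (remaining I h \<inter> \<Union>(set Rs))"
    unfolding remaining_def by auto
  moreover have "(I - remaining I h) \<inter> (remaining I h \<inter> \<Union>(set Rs)) = {}" by auto
  moreover have "finite (remaining I h \<inter> \<Union>(set Rs))" using assms unfolding remaining_def by auto
  ultimately show ?thesis using assms by (simp add: sum.union_disjoint)
qed

lemma fval_S:
  assumes finI: "finite I" and SI: "S \<subseteq> I" and x: "x \<in> LP_feas I w k S M"
  shows "fval I w v k x = (\<Sum>i\<in>S. cover I w k x i * v i)"
proof -
  have z: "cover I w k x i = 0" if "i \<in> I - S" for i
    unfolding cover_def using x that unfolding LP_feas_def by (intro sum.neutral) auto
  show ?thesis unfolding fval_def
    by (rule sum.mono_neutral_right) (use finI SI z in auto)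
qed

lemma cover_01:
  assumes finI: "finite I" and x: "x \<in> LP_feas I w k S M" and i: "i \<in> I"
  shows "0 \<le> cover I w k x i" "cover I w k x i \<le> 1"
  using x i unfolding LP_feas_def feasible_def frac_sol_def cover_def
  by (auto intro: sum_nonneg)


lemma round_bound:
  fixes m r a :: real and q :: nat
  assumes finI: "finite I" and vnn: "\<forall>i\<in>I. 0 \<le> v i" and SI: "S \<subseteq> I"
    and x: "x \<in> LP_feas I w k S (m * a)"
    and m: "m > 0" and r: "0 < r" "r < 1" and a: "r \<le> a" "a \<le> 1"
    and q: "real q = r^2 * m" and ma: "1 \<le> m * a"
  shows "measure_pmf.expectation (replicate_pmf q (sample_conf I w k x)) (\<lambda>Rs. sum v (S \<inter> \<Union>(set Rs)))
         \<ge> (r^2 - r^3) / a * fval I w v k x"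
proof -
  have M: "m * a > 0" using ma by linarith
  have "(r^2 - r^3) / a * fval I w v k x = (\<Sum>i\<in>S. v i * ((r^2 - r^3) * cover I w k x i / a))"
    unfolding fval_S[OF finI SI x] sum_distrib_left by (rule sum.cong) auto
  also have "\<dots> \<le> (\<Sum>i\<in>S. v i * (1 - (1 - cover I w k x i / (m * a)) ^ q))"
  proof (rule sum_mono)
    fix i assume i: "i \<in> S"
    then have iI: "i \<in> I" using SI by auto
    show "v i * ((r^2 - r^3) * cover I w k x i / a) \<le> v i * (1 - (1 - cover I w k x i / (m * a)) ^ q)"
      by (rule mult_left_mono, rule num_bound)
         (use cover_01[OF finI x iI] m r a q ma vnn iI in auto)
  qed
  also have "\<dots> = measure_pmf.expectation (replicate_pmf q (sample_conf I w k x)) (\<lambda>Rs. sum v (S \<inter> \<Union>(set Rs)))"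
    by (rule E_gain[OF finI SI x M, symmetric])
  finally show ?thesis .
qed


lemma main_ind:
  fixes m r :: real and q J J' :: nat and a :: "nat \<Rightarrow> real"
  assumes finI: "finite I" and vnn: "\<forall>i\<in>I. 0 \<le> v i"
    and m: "m > 0" and r: "0 < r" "r < 1" and q: "real q = r^2 * m"
    and selJ: "\<forall>j\<in>{1..J}. \<forall>h. length h = j - 1 \<longrightarrow> sel j h \<in> LP_feas I w k (remaining I h) (m * a j)"
    and apos: "\<forall>j\<in>{1..J}. a j > 0"
    and aJ': "\<forall>j\<in>{1..J'}. r \<le> a j \<and> a j \<le> 1 \<and> 1 \<le> m * a j"
    and J'J: "J' \<le> J"
  shows "n \<le> J \<Longrightarrow> measure_pmf.expectation (irr_run I w k q sel n) (\<lambda>h. sum v (I - remaining I h))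
     \<ge> (\<Sum>j=1..n. (if j \<le> J' then (r^2 - r^3) / a j else 0) *
            measure_pmf.expectation (irr_run I w k q sel (j - 1)) (\<lambda>h. fval I w v k (sel j h)))"
proof (induction n)
  case 0 then show ?case by (simp add: remaining_def)
next
  case (Suc n)
  let ?run = "irr_run I w k q sel"
  let ?G = "\<lambda>h. sum v (I - remaining I h)"
  let ?K = "if Suc n \<le> J' then (r^2 - r^3) / a (Suc n) else 0"
  let ?F = "\<lambda>h. fval I w v k (sel (Suc n) h)"
  have sfin: "\<forall>j\<in>{1..J}. \<forall>h. length h = j - 1 \<longrightarrow> finite (set_pmf (sample_conf I w k (sel j h)))"
    using selJ apos m by (auto intro!: samp_fin[OF finI])
  have finn: "finite (set_pmf (?run n))" using run_fin[OF sfin] Suc.prems by simp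
  have ins: "sel (Suc n) h \<in> LP_feas I w k (remaining I h) (m * a (Suc n))"
    if "h \<in> set_pmf (?run n)" for h
    using selJ Suc.prems run_len[OF that] by auto
  have Mpos: "m * a (Suc n) > 0" using apos Suc.prems m by auto
  have fin2: "finite (set_pmf (map_pmf (\<lambda>Rs. h @ [Rs]) (replicate_pmf q (sample_conf I w k (sel (Suc n) h)))))"
    if "h \<in> set_pmf (?run n)" for h
    using fin_rep[OF samp_fin[OF finI ins[OF that] Mpos]] by simp
  have step: "measure_pmf.expectation (?run (Suc n)) ?G
      = measure_pmf.expectation (?run n) (\<lambda>h. measure_pmf.expectation
           (replicate_pmf q (sample_conf I w k (sel (Suc n) h))) (\<lambda>Rs. ?G (h @ [Rs])))"
    by (simp only: irr_run.simps, subst E_bind_fin[OF finn fin2]) auto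
  have pw: "measure_pmf.expectation (replicate_pmf q (sample_conf I w k (sel (Suc n) h))) (\<lambda>Rs. ?G (h @ [Rs]))
        \<ge> ?G h + ?K * ?F h" if h: "h \<in> set_pmf (?run n)" for h
  proof -
    let ?R = "replicate_pmf q (sample_conf I w k (sel (Suc n) h))"
    have fR: "finite (set_pmf ?R)" by (rule fin_rep[OF samp_fin[OF finI ins[OF h] Mpos]])
    have "measure_pmf.expectation ?R (\<lambda>Rs. ?G (h @ [Rs]))
       = measure_pmf.expectation ?R (\<lambda>Rs. ?G h + sum v (remaining I h \<inter> \<Union>(set Rs)))"
      by (simp only: G_app[OF finI])
    also have "\<dots> = ?G h + measure_pmf.expectation ?R (\<lambda>Rs. sum v (remaining I h \<inter> \<Union>(set Rs)))"
      by (subst Bochner_Integration.integral_add; (rule integrable_measure_pmf_finite[OF fR])?) simp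
    finally have eq: "measure_pmf.expectation ?R (\<lambda>Rs. ?G (h @ [Rs])) = \<dots>" .
    have "?K * ?F h \<le> measure_pmf.expectation ?R (\<lambda>Rs. sum v (remaining I h \<inter> \<Union>(set Rs)))"
    proof (cases "Suc n \<le> J'")
      case True
      then have aa: "r \<le> a (Suc n)" "a (Suc n) \<le> 1" "1 \<le> m * a (Suc n)" using aJ' by auto
      show ?thesis using True round_bound[OF finI vnn _ ins[OF h] m r aa(1,2) q aa(3)]
        by (auto simp: remaining_def)
    next
      case False
      have "0 \<le> measure_pmf.expectation ?R (\<lambda>Rs. sum v (remaining I h \<inter> \<Union>(set Rs)))"
        by (rule Bochner_Integration.integral_nonneg) (use vnn in \<open>auto intro!: sum_nonneg simp: remaining_def\<close>)
      then show ?thesis using False by simp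
    qed
    then show ?thesis using eq by linarith
  qed
  have "measure_pmf.expectation (?run n) (\<lambda>h. ?G h + ?K * ?F h)
      \<le> measure_pmf.expectation (?run n) (\<lambda>h. measure_pmf.expectation
           (replicate_pmf q (sample_conf I w k (sel (Suc n) h))) (\<lambda>Rs. ?G (h @ [Rs])))"
    unfolding E_fin[OF finn] by (rule sum_mono, rule mult_left_mono) (use pw in auto)
  also have "measure_pmf.expectation (?run n) (\<lambda>h. ?G h + ?K * ?F h)
      = measure_pmf.expectation (?run n) ?G + ?K * measure_pmf.expectation (?run n) ?F"
    by (subst Bochner_Integration.integral_add; (rule integrable_measure_pmf_finite[OF finn])?) simp
  finally have "measure_pmf.expectation (?run (Suc n)) ?G
       \<ge> measure_pmf.expectation (?run n) ?G + ?K * measure_pmf.expectation (?run n) ?F"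
    using step by simp
  moreover have "measure_pmf.expectation (?run n) ?G \<ge> (\<Sum>j=1..n. (if j \<le> J' then (r^2 - r^3) / a j else 0) *
            measure_pmf.expectation (?run (j - 1)) (\<lambda>h. fval I w v k (sel j h)))"
    using Suc by simp
  ultimately show ?case by simp
qed


theorem lemma3p1:
  fixes I :: "'a set" and w v :: "'a \<Rightarrow> real" and m k :: nat and eps :: real
    and sel :: "nat \<Rightarrow> 'a set list list \<Rightarrow> ('a set \<Rightarrow> real)"
  assumes finI: "finite I"
    and w01: "\<forall>i\<in>I. 0 \<le> w i \<and> w i \<le> 1"
    and vnn: "\<forall>i\<in>I. 0 \<le> v i"
    and mpos: "m > 0" and kpos: "k > 0"
    and eps: "0 < eps" "eps < 0.1"
    and eps_sqrt_nat: "eps powr (-1/2) \<in> \<nat>"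
    and simple: "real m > exp (exp (eps powr (-30)))" "eps * real m \<in> \<nat>"
    and sel: "\<forall>j\<in>{1..nat \<lfloor>1/eps\<rfloor>}. \<forall>h. length h = j - 1 \<longrightarrow>
               approx_LP eps I w v k (remaining I h) (real m * (1 - (real j - 1) * eps)) (sel j h)"
  shows "measure_pmf.expectation (irr_run I w k (nat \<lfloor>eps * real m\<rfloor>) sel (nat \<lfloor>1/eps\<rfloor>))
            (\<lambda>h. sum v (I - remaining I h))
         \<ge> (eps - eps powr (3/2)) *
           (\<Sum>j = 1..nat \<lfloor>1/eps\<rfloor> - nat \<lfloor>eps powr (-1/2)\<rfloor>.
              measure_pmf.expectation (irr_run I w k (nat \<lfloor>eps * real m\<rfloor>) sel (nat \<lfloor>1/eps\<rfloor>))
                 (\<lambda>h. fval I w v k (sel j (take (j - 1) h)))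
              / (1 - (real j - 1) * eps))"
proof -
  obtain N :: nat where N: "eps powr (-1/2) = real N" using eps_sqrt_nat Nats_cases by blast
  have p1: "eps powr (-1/2) = 1 / sqrt eps"
    using eps by (simp add: powr_minus_divide powr_half_sqrt[symmetric])
  have sN: "sqrt eps = 1 / real N" using N p1 by (simp add: field_simps)
  have Npos: "N > 0" by (rule ccontr) (use sN eps in simp)
  define r where "r = 1 / real N"
  have r0: "0 < r" using Npos by (simp add: r_def)
  have er: "eps = r^2" using sN eps by (metis r_def real_sqrt_pow2 less_imp_le)
  have r1: "r < 1"
  proof (rule ccontr)
    assume "\<not> r < 1" then have "1 \<le> r^2" by (simp add: one_le_power)
    then show False using er eps by simp
  qed
  have e32: "eps powr (3/2) = r^3"
  proof -
    have "eps powr (3/2) = eps powr (1 + 1/2)" by simp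
    also have "\<dots> = eps * sqrt eps" using eps by (simp only: powr_add) (simp add: powr_half_sqrt)
    finally show ?thesis using sN er by (simp add: r_def power3_eq_cube power2_eq_square)
  qed
  have ie: "1/eps = real (N^2)" unfolding er r_def by (simp add: power_divide)
  have JJ: "nat \<lfloor>1/eps\<rfloor> = N^2" unfolding ie floor_of_nat nat_int ..
  have NN: "nat \<lfloor>eps powr (-1/2)\<rfloor> = N" using N by simp
  obtain q :: nat where qd: "eps * real m = real q" using simple(2) Nats_cases by metis
  have qq: "nat \<lfloor>eps * real m\<rfloor> = q" using qd by simp
  have qr: "real q = r^2 * real m" using qd er by simp
  have "0 < eps * real m" using eps mpos by simp
  then have q1: "1 \<le> q" using qd by simp
  define a where "a j = 1 - (real j - 1) * eps" for j :: nat
  have NN2: "N \<le> N^2" by (simp add: power2_eq_square)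
  have apos: "\<forall>j\<in>{1..N^2}. a j > 0"
  proof
    fix j assume j: "j \<in> {1..N^2}"
    then have "real j \<le> real (N^2)" by auto
    then have "real j - 1 < real (N^2)" by linarith
    then have "(real j - 1) * r^2 < real (N^2) * r^2" using r0 by (intro mult_strict_right_mono) auto
    also have "real (N^2) * r^2 = 1" using Npos by (simp add: r_def power2_eq_square)
    finally show "a j > 0" unfolding a_def er by simp
  qed
  have aJ': "\<forall>j\<in>{1..N^2 - N}. r \<le> a j \<and> a j \<le> 1 \<and> 1 \<le> real m * a j"
  proof
    fix j assume j: "j \<in> {1..N^2 - N}"
    have "real j \<le> real (N ^ 2 - N)" using j by simp
    also have "real (N ^ 2 - N) = real N ^ 2 - real N" using NN2 by (simp add: of_nat_diff)
    finally have "real j \<le> real N ^ 2 - real N" .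
    then have "(real j - 1) * r^2 \<le> (real N ^ 2 - real N) * r^2" using r0 by (intro mult_right_mono) auto
    also have "(real N ^ 2 - real N) * r^2 = 1 - r" using Npos by (simp add: r_def field_simps power2_eq_square)
    finally have ra: "r \<le> a j" unfolding a_def er by simp
    have a1: "a j \<le> 1" unfolding a_def using j eps by simp
    have "1 \<le> real q" using q1 by simp
    also have "real q = r * (r * real m)" using qr by (simp add: power2_eq_square)
    also have "\<dots> \<le> 1 * (r * real m)" using r1 r0 mpos by (intro mult_right_mono) auto
    also have "\<dots> \<le> real m * a j" using ra mpos by simp
    finally show "r \<le> a j \<and> a j \<le> 1 \<and> 1 \<le> real m * a j" using ra a1 by simp
  qed
  have selJ: "\<forall>j\<in>{1..N^2}. \<forall>h. length h = j - 1 \<longrightarrow> sel j h \<in> LP_feas I w k (remaining I h) (real m * a j)"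
    using sel unfolding JJ approx_LP_def a_def by blast
  let ?run = "irr_run I w k q sel"
  have main: "measure_pmf.expectation (?run (N^2)) (\<lambda>h. sum v (I - remaining I h))
     \<ge> (\<Sum>j=1..N^2. (if j \<le> N^2 - N then (r^2 - r^3) / a j else 0) *
            measure_pmf.expectation (?run (j - 1)) (\<lambda>h. fval I w v k (sel j h)))"
    by (rule main_ind[OF finI vnn _ r0 r1 qr selJ apos aJ']) (use mpos in auto)
  also have "(\<Sum>j=1..N^2. (if j \<le> N^2 - N then (r^2 - r^3) / a j else 0) *
            measure_pmf.expectation (?run (j - 1)) (\<lambda>h. fval I w v k (sel j h)))
     = (\<Sum>j=1..N^2 - N. (if j \<le> N^2 - N then (r^2 - r^3) / a j else 0) *
            measure_pmf.expectation (?run (j - 1)) (\<lambda>h. fval I w v k (sel j h)))"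
    by (rule sum.mono_neutral_right) auto
  also have "\<dots> = (r^2 - r^3) * (\<Sum>j=1..N^2 - N.
            measure_pmf.expectation (?run (N^2)) (\<lambda>h. fval I w v k (sel j (take (j - 1) h))) / a j)"
    unfolding sum_distrib_left
  proof (rule sum.cong[OF refl])
    fix j assume j: "j \<in> {1..N^2 - N}"
    have "measure_pmf.expectation (?run (N^2)) (\<lambda>h. fval I w v k (sel j (take (j - 1) h)))
        = measure_pmf.expectation (map_pmf (take (j - 1)) (?run (N^2))) (\<lambda>h. fval I w v k (sel j h))"
      by simp
    also have "map_pmf (take (j - 1)) (?run (N^2)) = ?run (j - 1)"
      using j by (intro run_take) auto
    finally show "(if j \<le> N^2 - N then (r^2 - r^3) / a j else 0) *
            measure_pmf.expectation (?run (j - 1)) (\<lambda>h. fval I w v k (sel j h))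
         = (r^2 - r^3) * (measure_pmf.expectation (?run (N^2)) (\<lambda>h. fval I w v k (sel j (take (j - 1) h))) / a j)"
      using j by simp
  qed
  finally show ?thesis unfolding JJ NN qq e32 a_def er[symmetric] by simp
qed

end
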